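(* For every graph $G$ and every connected subgraph $H\subseteq G$, $$R_3(G)\geqslant (\chi(H)-1)(R_2(H)-1)+1.$$
   Context: For a graph $G$ and integer $r\geqslant 2$, the $r$-colour Ramsey number $R_r(G)$ is the smallest integer $N$ such that every colouring of the edges of $K_N$ with $r$ colours contains a monochromatic copy of $G$. $\chi(H)$ denotes the chromatic number of $H$. *)

theory Defs
  imports Main
begin

definition graph :: "'a set \<Rightarrow> 'a set set \<Rightarrow> bool" where
  "graph V E \<longleftrightarrow> finite V \<and> (\<forall>e\<in>E. e \<subseteq> V \<and> card e = 2)"

definition subgraph :: "'a set \<Rightarrow> 'a set set \<Rightarrow> 'a set \<Rightarrow> 'a set set \<Rightarrow> bool" where
  "subgraph W F V E \<longleftrightarrow> graph W F \<and> graph V E \<and> W \<subseteq> V \<and> F \<subseteq> E"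

definition adj :: "'a set set \<Rightarrow> 'a \<Rightarrow> 'a \<Rightarrow> bool" where
  "adj E u v \<longleftrightarrow> {u, v} \<in> E"

definition connected_graph :: "'a set \<Rightarrow> 'a set set \<Rightarrow> bool" where
  "connected_graph V E \<longleftrightarrow> graph V E \<and> V \<noteq> {} \<and>
     (\<forall>u\<in>V. \<forall>v\<in>V. (adj E)\<^sup>*\<^sup>* u v)"

definition proper_colouring :: "'a set \<Rightarrow> 'a set set \<Rightarrow> nat \<Rightarrow> ('a \<Rightarrow> nat) \<Rightarrow> bool" where
  "proper_colouring V E k f \<longleftrightarrow> (\<forall>v\<in>V. f v < k) \<and> (\<forall>u v. {u, v} \<in> E \<longrightarrow> f u \<noteq> f v)"

definition chromatic_number :: "'a set \<Rightarrow> 'a set set \<Rightarrow> nat" where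
  "chromatic_number V E = (LEAST k. \<exists>f. proper_colouring V E k f)"

definition ramsey_prop :: "nat \<Rightarrow> 'a set \<Rightarrow> 'a set set \<Rightarrow> nat \<Rightarrow> bool" where
  "ramsey_prop r V E N \<longleftrightarrow>
     (\<forall>c :: nat set \<Rightarrow> nat. (\<forall>e. e \<subseteq> {..<N} \<and> card e = 2 \<longrightarrow> c e < r) \<longrightarrow>
        (\<exists>col<r. \<exists>\<phi>. inj_on \<phi> V \<and> \<phi> ` V \<subseteq> {..<N} \<and> (\<forall>e\<in>E. c (\<phi> ` e) = col)))"

definition ramsey_number :: "nat \<Rightarrow> 'a set \<Rightarrow> 'a set set \<Rightarrow> nat" where
  "ramsey_number r V E = (LEAST N. ramsey_prop r V E N)"

end

theory Submission
  imports Defs "HOL-Library.Ramsey"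
begin

lemma divmod_inj: "(x::nat) div m = y div m \<Longrightarrow> x mod m = y mod m \<Longrightarrow> x = y"
  by (metis mult_div_mod_eq)

lemma ramsey_prop_mono:
  assumes "ramsey_prop r V E n" "n \<le> N"
  shows "ramsey_prop r V E N"
  unfolding ramsey_prop_def
proof (intro allI impI)
  fix c :: "nat set \<Rightarrow> nat"
  assume "\<forall>e. e \<subseteq> {..<N} \<and> card e = 2 \<longrightarrow> c e < r"
  then have "\<forall>e. e \<subseteq> {..<n} \<and> card e = 2 \<longrightarrow> c e < r"
    using assms(2) by (meson lessThan_subset_iff subset_trans)
  from assms(1)[unfolded ramsey_prop_def, THEN spec[of _ c], THEN mp, OF this]
  obtain col \<phi> where h: "col < r" "inj_on \<phi> V" "\<phi> ` V \<subseteq> {..<n}" "\<forall>e\<in>E. c (\<phi> ` e) = col"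
    by blast
  have "\<phi> ` V \<subseteq> {..<N}" using h(3) assms(2) by (meson lessThan_subset_iff subset_trans)
  then show "\<exists>col<r. \<exists>\<phi>. inj_on \<phi> V \<and> \<phi> ` V \<subseteq> {..<N} \<and> (\<forall>e\<in>E. c (\<phi> ` e) = col)"
    using h by blast
qed

lemma ramsey_exists:
  assumes "graph V E"
  shows "\<exists>N. ramsey_prop 3 V E N"
proof -
  define k where "k = card V"
  obtain N :: nat where N: "partn_lst {..<N} [k,k,k] 2" using ramsey_full[of "[k,k,k]" 2] by blast
  have "ramsey_prop 3 V E N"
    unfolding ramsey_prop_def
  proof (intro allI impI)
    fix c :: "nat set \<Rightarrow> nat"
    assume c: "\<forall>e. e \<subseteq> {..<N} \<and> card e = 2 \<longrightarrow> c e < 3"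
    have cPi: "c \<in> nsets {..<N} 2 \<rightarrow> {..<length [k,k,k]}"
      using c unfolding nsets_def by (simp add: Pi_def numeral_3_eq_3)
    obtain i H where i: "i < length [k,k,k]" "H \<in> nsets {..<N} ([k,k,k]!i)"
        "c ` (nsets H 2) \<subseteq> {i}"
      by (rule partn_lstE[OF N cPi refl])
    have Hk: "H \<in> nsets {..<N} k" proof -
      have "[k,k,k]!i = k" proof -
        have "i = 0 \<or> i = 1 \<or> i = 2" using i(1) by auto
        then show ?thesis by auto
      qed
      then show ?thesis using i(2) by simp
    qed
    then have fH: "finite H" "card H = k" "H \<subseteq> {..<N}" by (auto simp: nsets_def)
    have fV: "finite V" using assms by (simp add: graph_def)
    obtain \<phi> where \<phi>: "bij_betw \<phi> V H"
      using finite_same_card_bij[OF fV fH(1)] fH(2) k_def by auto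
    have "\<forall>e\<in>E. c (\<phi> ` e) = i"
    proof
      fix e assume e: "e \<in> E"
      then have "e \<subseteq> V" "card e = 2" using assms by (auto simp: graph_def)
      moreover have "inj_on \<phi> e" using \<phi> \<open>e \<subseteq> V\<close> by (meson bij_betw_def inj_on_subset)
      moreover have "\<phi> ` e \<subseteq> H" using \<phi> \<open>e \<subseteq> V\<close> by (auto simp: bij_betw_def)
      ultimately have "\<phi> ` e \<in> nsets H 2"
        unfolding nsets_def using fH(1) by (simp add: card_image finite_subset)
      then show "c (\<phi> ` e) = i" using i(3) by blast
    qed
    then show "\<exists>col<3. \<exists>\<phi>. inj_on \<phi> V \<and> \<phi> ` V \<subseteq> {..<N} \<and> (\<forall>e\<in>E. c (\<phi> ` e) = col)"
    proof -
      have "i < 3" using i(1) by simp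
      moreover have "inj_on \<phi> V" "\<phi> ` V \<subseteq> {..<N}" using \<phi> fH(3) by (auto simp: bij_betw_def)
      ultimately show ?thesis using \<open>\<forall>e\<in>E. c (\<phi> ` e) = i\<close> by blast
    qed
  qed
  then show ?thesis by blast
qed

theorem lemma4p1:
  fixes V W :: "'a set" and E F :: "'a set set"
  assumes "graph V E"
    and "subgraph W F V E"
    and "connected_graph W F"
  shows "ramsey_number 3 V E \<ge>
           (chromatic_number W F - 1) * (ramsey_number 2 W F - 1) + 1"
proof -
  define m where "m = ramsey_number 2 W F - 1"
  define k where "k = chromatic_number W F - 1"
  define N where "N = k * m"
  have WV: "W \<subseteq> V" "F \<subseteq> E" using assms(2) by (auto simp: subgraph_def)
  have Wne: "W \<noteq> {}" using assms(3) by (simp add: connected_graph_def)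
  have gF: "\<forall>e\<in>F. e \<subseteq> W \<and> card e = 2" using assms(3) by (simp add: connected_graph_def graph_def)
  have conn: "\<forall>u\<in>W. \<forall>v\<in>W. (adj F)\<^sup>*\<^sup>* u v" using assms(3) by (simp add: connected_graph_def)
  have notP: "\<not> ramsey_prop 3 V E N"
  proof
    assume P: "ramsey_prop 3 V E N"
    have "N > 0"
    proof (rule ccontr)
      assume "\<not> N > 0"
      then have "N = 0" by simp
      have "\<exists>col<3. \<exists>\<phi>. inj_on \<phi> V \<and> \<phi> ` V \<subseteq> {..<N} \<and> (\<forall>e\<in>E. (\<lambda>_. 0::nat) (\<phi> ` e) = col)"
        by (rule P[unfolded ramsey_prop_def, rule_format, of "\<lambda>_. 0"]) simp
      then obtain \<phi> where "\<phi> ` V \<subseteq> {..<N}" by blast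
      then show False using \<open>N = 0\<close> Wne WV by auto
    qed
    then have m0: "m > 0" and k0: "k > 0" unfolding N_def by auto
    have "m < ramsey_number 2 W F" using m0 unfolding m_def by simp
    then have "\<not> ramsey_prop 2 W F m" unfolding ramsey_number_def by (rule not_less_Least)
    then obtain c0 :: "nat set \<Rightarrow> nat" where
      c0: "\<forall>e. e \<subseteq> {..<m} \<and> card e = 2 \<longrightarrow> c0 e < 2" and
      c0n: "\<not> (\<exists>col<2. \<exists>\<phi>. inj_on \<phi> W \<and> \<phi> ` W \<subseteq> {..<m} \<and> (\<forall>e\<in>F. c0 (\<phi> ` e) = col))"
      unfolding ramsey_prop_def not_all not_imp by (elim exE conjE) blast
    define c where "c e = (if card e = 2 \<and> (\<exists>b. \<forall>x\<in>e. x div m = b) then c0 ((\<lambda>x. x mod m) ` e) else 2)"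
      for e :: "nat set"
    have cin: "c e < 2" if "card e = 2" "\<forall>x\<in>e. x div m = b" for e b
    proof -
      have "inj_on (\<lambda>x. x mod m) e"
      proof (rule inj_onI)
        fix x y assume "x \<in> e" "y \<in> e" "x mod m = y mod m"
        then show "x = y" using that(2) divmod_inj[of x m y] by simp
      qed
      then have "card ((\<lambda>x. x mod m) ` e) = 2" using that(1) by (simp add: card_image)
      moreover have "(\<lambda>x. x mod m) ` e \<subseteq> {..<m}" using m0 by auto
      ultimately show ?thesis using c0 that unfolding c_def by auto
    qed
    have "\<forall>e. e \<subseteq> {..<N} \<and> card e = 2 \<longrightarrow> c e < 3"
    proof (intro allI impI)
      fix e :: "nat set" assume "e \<subseteq> {..<N} \<and> card e = 2"
      show "c e < 3"
      proof (cases "card e = 2 \<and> (\<exists>b. \<forall>x\<in>e. x div m = b)")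
        case True
        then obtain b where "card e = 2" "\<forall>x\<in>e. x div m = b" by blast
        then have "c e < 2" by (rule cin)
        then show ?thesis by simp
      next
        case False
        have "c e = 2" by (simp only: c_def False if_False)
        then show ?thesis by simp
      qed
    qed
    from P[unfolded ramsey_prop_def, THEN spec[of _ c], THEN mp, OF this]
    obtain col \<phi> where col: "col < 3" "inj_on \<phi> V" "\<phi> ` V \<subseteq> {..<N}" "\<forall>e\<in>E. c (\<phi> ` e) = col"
      by blast
    have injW: "inj_on \<phi> W" using col(2) WV inj_on_subset by blast
    have edge: "u \<in> W \<and> v \<in> W \<and> u \<noteq> v \<and> card (\<phi> ` {u, v}) = 2 \<and> c (\<phi> ` {u, v}) = col"
      if "{u, v} \<in> F" for u v
    proof -
      have "{u,v} \<subseteq> W" "card {u,v} = 2" using gF that by auto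
      then have uv: "u \<in> W" "v \<in> W" "u \<noteq> v" by auto
      then have "\<phi> u \<noteq> \<phi> v" using injW by (meson inj_on_def)
      then have "card (\<phi> ` {u, v}) = 2" by simp
      moreover have "c (\<phi> ` {u, v}) = col" using col(4) WV that by blast
      ultimately show ?thesis using uv by blast
    qed
    show False
    proof (cases "col < 2")
      case True
      have same: "\<phi> u div m = \<phi> v div m" if "{u, v} \<in> F" for u v
      proof (rule ccontr)
        assume "\<phi> u div m \<noteq> \<phi> v div m"
        then have "c (\<phi> ` {u, v}) = 2" unfolding c_def by auto
        then show False using edge[OF that] True by simp
      qed
      have reach: "\<phi> u div m = \<phi> v div m" if "(adj F)\<^sup>*\<^sup>* u v" for u v
        using that
      proof (induction rule: rtranclp_induct)
        case base then show ?case by simp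
      next
        case (step y z) then show ?case using same[of y z] unfolding adj_def by simp
      qed
      have allsame: "\<forall>u\<in>W. \<forall>v\<in>W. \<phi> u div m = \<phi> v div m"
      proof (intro ballI)
        fix u v assume "u \<in> W" "v \<in> W"
        then have "(adj F)\<^sup>*\<^sup>* u v" using conn by blast
        then show "\<phi> u div m = \<phi> v div m" by (rule reach)
      qed
      define \<psi> where "\<psi> x = \<phi> x mod m" for x
      have "inj_on \<psi> W"
      proof (rule inj_onI)
        fix u v assume "u \<in> W" "v \<in> W" "\<psi> u = \<psi> v"
        have "\<phi> u div m = \<phi> v div m" using allsame \<open>u \<in> W\<close> \<open>v \<in> W\<close> by blast
        moreover have "\<phi> u mod m = \<phi> v mod m" using \<open>\<psi> u = \<psi> v\<close> unfolding \<psi>_def .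
        ultimately have "\<phi> u = \<phi> v" by (rule divmod_inj)
        then show "u = v" using injW \<open>u \<in> W\<close> \<open>v \<in> W\<close> by (meson inj_on_def)
      qed
      moreover have "\<psi> ` W \<subseteq> {..<m}" using m0 unfolding \<psi>_def by auto
      moreover have "\<forall>e\<in>F. c0 (\<psi> ` e) = col"
      proof
        fix e assume e: "e \<in> F"
        have "card e = 2" using gF e by blast
        then obtain u v where uv: "e = {u, v}" by (auto simp: card_2_iff)
        have E: "u \<in> W \<and> v \<in> W \<and> u \<noteq> v \<and> card (\<phi> ` {u, v}) = 2 \<and> c (\<phi> ` {u, v}) = col"
          using e unfolding uv by (rule edge)
        have "\<forall>x\<in>\<phi> ` {u, v}. x div m = \<phi> u div m" using allsame E by auto
        then have "c (\<phi> ` {u, v}) = c0 ((\<lambda>x. x mod m) ` \<phi> ` {u, v})"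
          using E unfolding c_def by auto
        moreover have "(\<lambda>x. x mod m) ` \<phi> ` {u, v} = \<psi> ` e" unfolding \<psi>_def uv by auto
        ultimately show "c0 (\<psi> ` e) = col" using E by simp
      qed
      ultimately show False using c0n True by blast
    next
      case False
      then have col2: "col = 2" using col(1) by simp
      define f where "f x = \<phi> x div m" for x
      have "proper_colouring W F k f"
        unfolding proper_colouring_def
      proof (intro conjI allI impI ballI)
        fix v assume "v \<in> W"
        then have "\<phi> v < k * m" using col(3) WV unfolding N_def by auto
        then show "f v < k" unfolding f_def using m0
          by (simp add: less_mult_imp_div_less)
      next
        fix u v assume uv: "{u, v} \<in> F"
        show "f u \<noteq> f v"
        proof
          assume "f u = f v"
          then have "\<forall>x\<in>\<phi> ` {u, v}. x div m = \<phi> u div m" unfolding f_def by auto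
          then have "c (\<phi> ` {u, v}) < 2" using edge[OF uv] by (intro cin) auto
          then show False using edge[OF uv] col2 by simp
        qed
      qed
      moreover have "k < chromatic_number W F" using k0 unfolding k_def by simp
      ultimately show False unfolding chromatic_number_def using not_less_Least by blast
    qed
  qed
  have notP': "\<not> ramsey_prop 3 V E n" if "n \<le> N" for n
  proof
    assume "ramsey_prop 3 V E n"
    from ramsey_prop_mono[OF this that] notP show False by simp
  qed
  obtain N0 where "ramsey_prop 3 V E N0" using ramsey_exists[OF assms(1)] by blast
  then have "ramsey_prop 3 V E (ramsey_number 3 V E)"
    unfolding ramsey_number_def by (rule LeastI)
  then have "\<not> ramsey_number 3 V E \<le> N" using notP' by blast
  then have "ramsey_number 3 V E > N" by simp
  then show ?thesis unfolding N_def k_def m_def by simp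
qed

end
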